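(* For every integer $k\ge 1$ there is a polynomial $D_k$ of degree exactly $2k-2$ such that $d_k(n)=D_k(n)$ for all integers $n\ge 1$; and for every integer $k\ge 2$ there is a polynomial $S_k$ of degree exactly $2k-3$ such that $s_k(n)=S_k(n)$ for all integers $n\ge 1$.
   Context: For $n\ge 1$, the $2\times n$ board consists of $2n$ unit squares arranged in 2 rows and $n$ columns; two squares are adjacent iff they share an edge. A piece is a nonempty set of squares that is connected under adjacency. A division of the board into $k$ pieces is a partition of the set of all $2n$ squares into exactly $k$ pieces. $d_k(n)$ denotes the number of divisions of the $2\times n$ board into $k$ pieces. $s_k(n)$ denotes the number of such divisions in which the two squares of the rightmost column lie in different pieces. *)

theory Defs
  imports Complex_Main "HOL-Library.Disjoint_Sets" "HOL-Computational_Algebra.Polynomial"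
begin

definition board :: "nat \<Rightarrow> (nat \<times> nat) set" where
  "board n = {0, 1} \<times> {0..<n}"

definition adjacent :: "nat \<times> nat \<Rightarrow> nat \<times> nat \<Rightarrow> bool" where
  "adjacent a b \<longleftrightarrow>
     (fst a = fst b \<and> (snd a = snd b + 1 \<or> snd b = snd a + 1)) \<or>
     (snd a = snd b \<and> (fst a = fst b + 1 \<or> fst b = fst a + 1))"

definition is_piece :: "(nat \<times> nat) set \<Rightarrow> bool" where
  "is_piece P \<longleftrightarrow> P \<noteq> {} \<and>
     (\<forall>x\<in>P. \<forall>y\<in>P. (\<lambda>a b. a \<in> P \<and> b \<in> P \<and> adjacent a b)\<^sup>*\<^sup>* x y)"

definition divisions :: "nat \<Rightarrow> nat \<Rightarrow> (nat \<times> nat) set set set" where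
  "divisions k n = {Q. partition_on (board n) Q \<and> (\<forall>P\<in>Q. is_piece P) \<and> card Q = k}"

definition d :: "nat \<Rightarrow> nat \<Rightarrow> nat" where
  "d k n = card (divisions k n)"

definition s :: "nat \<Rightarrow> nat \<Rightarrow> nat" where
  "s k n = card {Q \<in> divisions k n.
      \<not> (\<exists>P\<in>Q. (0, n - 1) \<in> P \<and> (1, n - 1) \<in> P)}"

end

theory Submission
  imports Defs
begin


lemma bin_poly:
  fixes N :: nat
  defines "B \<equiv> (\<Sum>i<N. monom (of_nat (N choose i)) i) :: real poly"
  shows "poly B x = (x+1)^N - x^N" and "\<And>j. coeff B j = (if j < N then of_nat (N choose j) else 0)"
proof -
  have "(x+1)^N = (\<Sum>k\<le>N. of_nat (N choose k) * x^k * 1^(N-k))"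
    using binomial_ring[of x 1 N] by simp
  also have "\<dots> = (\<Sum>k<N. of_nat (N choose k) * x^k) + x^N"
    by (simp add: lessThan_Suc_atMost[symmetric])
  finally show "poly B x = (x+1)^N - x^N"
    by (simp add: B_def poly_sum poly_monom)
  fix j show "coeff B j = (if j < N then of_nat (N choose j) else 0)"
    by (simp add: B_def coeff_sum coeff_monom)
qed

lemma diff_poly_exists:
  "\<forall>p::real poly. degree p \<le> m \<longrightarrow> (\<exists>q. degree q \<le> Suc m \<and> coeff q (Suc m) = coeff p m / (m+1)
      \<and> (\<forall>x. poly q (x+1) - poly q x = poly p x))"
proof (induction m)
  case 0
  show ?case
  proof (intro allI impI)
    fix p :: "real poly" assume "degree p \<le> 0"
    then have p: "p = [:coeff p 0:]" using degree_0_id[of p] by simp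
    have pp: "poly p x = coeff p 0" for x by (subst p) simp
    show "\<exists>q. degree q \<le> Suc 0 \<and> coeff q (Suc 0) = coeff p 0 / (real 0+1) \<and> (\<forall>x. poly q (x+1) - poly q x = poly p x)"
      by (rule exI[of _ "[:0, coeff p 0:]"]) (auto simp: algebra_simps pp)
  qed
next
  case (Suc m)
  show ?case
  proof (intro allI impI)
    fix p :: "real poly" assume dp: "degree p \<le> Suc m"
    define N where "N = Suc (Suc m)"
    define B :: "real poly" where "B = (\<Sum>i<N. monom (of_nat (N choose i)) i)"
    define c where "c = coeff p (Suc m) / (real (Suc m) + 1)"
    have pB: "poly B x = (x+1)^N - x^N" for x unfolding B_def by (rule bin_poly)
    have cB: "coeff B j = (if j < N then of_nat (N choose j) else 0)" for j unfolding B_def by (rule bin_poly)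
    define r where "r = p - smult c B"
    have dB: "degree B \<le> Suc m" by (rule degree_le) (auto simp: cB N_def)
    have dr1: "degree r \<le> Suc m" unfolding r_def
      by (metis degree_diff_le degree_smult_le dp dB le_trans)
    have cr: "coeff r (Suc m) = 0"
      by (simp add: r_def cB N_def c_def)
    have dr: "degree r \<le> m"
    proof (rule ccontr)
      assume "\<not> degree r \<le> m"
      then have "degree r = Suc m" using dr1 by simp
      then have "r = 0" using cr by (metis leading_coeff_0_iff)
      then show False using \<open>degree r = Suc m\<close> by simp
    qed
    obtain qr where qr: "degree qr \<le> Suc m" "\<forall>x. poly qr (x+1) - poly qr x = poly r x"
      using Suc.IH dr by blast
    define q where "q = smult c (monom 1 N) + qr"
    have "degree q \<le> Suc (Suc m)" unfolding q_def N_def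
      by (metis degree_add_le degree_monom_le degree_smult_le le_trans qr(1) le_SucI)
    moreover have "coeff q (Suc (Suc m)) = coeff p (Suc m) / (real (Suc m) + 1)"
      using qr(1) by (simp add: q_def N_def c_def coeff_eq_0)
    moreover have "poly q (x+1) - poly q x = poly p x" for x
    proof -
      have "poly q (x+1) - poly q x = c * ((x+1)^N - x^N) + (poly qr (x+1) - poly qr x)"
        by (simp add: q_def poly_monom algebra_simps)
      also have "\<dots> = poly p x" using qr(2) pB[of x] by (simp add: r_def)
      finally show ?thesis .
    qed
    ultimately show "\<exists>q. degree q \<le> Suc (Suc m) \<and> coeff q (Suc (Suc m)) = coeff p (Suc m) / (real (Suc m) + 1) \<and> (\<forall>x. poly q (x+1) - poly q x = poly p x)"
      by blast
  qed
qed

lemma antidiff: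
  fixes f :: "nat \<Rightarrow> real" and p :: "real poly"
  assumes rec: "\<forall>n\<ge>1. f (Suc n) = f n + poly p (real n)" and p0: "p \<noteq> 0"
  shows "\<exists>q. degree q = Suc (degree p) \<and> lead_coeff q = lead_coeff p / (degree p + 1)
           \<and> (\<forall>n\<ge>1. f n = poly q (real n))"
proof -
  obtain q0 where q0: "degree q0 \<le> Suc (degree p)" "coeff q0 (Suc (degree p)) = lead_coeff p / (real (degree p) + 1)"
     "\<forall>x. poly q0 (x+1) - poly q0 x = poly p x"
    using diff_poly_exists[of "degree p"] by (metis order_refl)
  have "coeff q0 (Suc (degree p)) \<noteq> 0" using q0(2) p0 by (simp add: add_pos_nonneg)
  then have dq0: "degree q0 = Suc (degree p)" using q0(1) le_degree by (metis antisym)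
  define c where "c = f 1 - poly q0 1"
  define q where "q = q0 + [:c:]"
  have dq: "degree q = Suc (degree p)" unfolding q_def using dq0
    by (subst degree_add_eq_left) auto
  have lq: "lead_coeff q = lead_coeff p / (degree p + 1)" using dq dq0 q0(2)
    by (simp add: q_def)
  have "f n = poly q (real n)" if "n \<ge> 1" for n
    using that
  proof (induction n rule: dec_induct)
    case base then show ?case by (simp add: q_def c_def)
  next
    case (step n)
    have "f (Suc n) = f n + poly p (real n)" using rec step(1) by simp
    also have "\<dots> = poly q0 (real n) + c + (poly q0 (real n + 1) - poly q0 (real n))"
      using step(3) q0(3) by (simp add: q_def)
    finally show ?case by (simp add: q_def add.commute)
  qed
  then show ?thesis using dq lq by blast
qed


abbreviation conn :: "(nat \<times> nat) set \<Rightarrow> nat \<times> nat \<Rightarrow> nat \<times> nat \<Rightarrow> bool" where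
  "conn P \<equiv> (\<lambda>a b. a \<in> P \<and> b \<in> P \<and> adjacent a b)\<^sup>*\<^sup>*"

lemma conn_mono: "conn P x y \<Longrightarrow> P \<subseteq> P' \<Longrightarrow> conn P' x y"
  by (induction rule: rtranclp_induct) (auto intro: rtranclp.rtrancl_into_rtrancl)

lemma adjacent_sym: "adjacent x y \<Longrightarrow> adjacent y x"
  by (auto simp: adjacent_def)

lemma piece_insert:
  assumes "is_piece P" "x \<in> P" "adjacent x y"
  shows "is_piece (insert y P)"
  unfolding is_piece_def
proof (intro conjI ballI)
  have c: "conn (insert y P) u v" if "u \<in> P" "v \<in> P" for u v
  proof -
    have "conn P u v" using assms(1) that unfolding is_piece_def by blast
    then show ?thesis by (rule conn_mono) auto
  qed
  have xy: "conn (insert y P) x y" using assms(2,3) by (auto intro: r_into_rtranclp)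
  have yx: "conn (insert y P) y x" using assms(2,3) by (auto intro!: r_into_rtranclp adjacent_sym)
  fix u v assume "u \<in> insert y P" "v \<in> insert y P"
  then consider "u \<in> P" "v \<in> P" | "u = y" "v \<in> P" | "u \<in> P" "v = y" | "u = y" "v = y" by blast
  then show "conn (insert y P) u v"
  proof cases
    case 1 then show ?thesis using c by blast
  next
    case 2 then show ?thesis using yx c[of x v] assms(2) by (meson rtranclp_trans)
  next
    case 3 then show ?thesis using xy c[of u x] assms(2) by (meson rtranclp_trans)
  qed simp
qed simp

lemma piece_single: "is_piece {x}"
  by (auto simp: is_piece_def)

lemma piece_pair: "adjacent x y \<Longrightarrow> is_piece {x, y}"
  using piece_insert[OF piece_single, of x x y] by (simp add: insert_commute)

lemma piece_neighbor:
  assumes "is_piece P" "x \<in> P" "P \<noteq> {x}"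
  shows "\<exists>y\<in>P. adjacent x y"
proof -
  obtain z where z: "z \<in> P" "z \<noteq> x" using assms by blast
  have "conn P x z" using assms z unfolding is_piece_def by blast
  then show ?thesis using z(2) by (cases rule: converse_rtranclpE) auto
qed

definition col :: "nat \<Rightarrow> (nat \<times> nat) set" where
  "col n = {(0, Suc n), (1, Suc n)}"

lemma board_Suc: "board (Suc m) = board m \<union> {(0,m),(1,m)}"
  by (auto simp: board_def)

lemma board_col: "board (Suc (Suc n)) = board (Suc n) \<union> col n" "board (Suc n) \<inter> col n = {}"
  by (auto simp: board_def col_def)

lemma adj_col:
  assumes "y \<in> board (Suc (Suc n))" "y \<notin> col n" "y' \<in> col n" "adjacent y y'"
  shows "y = (0,n) \<and> y' = (0, Suc n) \<or> y = (1,n) \<and> y' = (1, Suc n)"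
  using assms by (auto simp: board_def col_def adjacent_def)

lemma piece_restrict:
  assumes "is_piece P" "P \<subseteq> board (Suc (Suc n))" "P - col n \<noteq> {}"
  shows "is_piece (P - col n)"
  unfolding is_piece_def
proof (intro conjI ballI)
  show "P - col n \<noteq> {}" by fact
  fix x y assume x: "x \<in> P - col n" and y: "y \<in> P - col n"
  let ?P = "P - col n"
  have "(y \<in> ?P \<longrightarrow> conn ?P x y) \<and> (y \<in> col n \<longrightarrow> (\<forall>z\<in>{(0,n),(1,n)} \<inter> P. conn ?P x z))"
    if "conn P x y" for y
    using that
  proof (induction rule: rtranclp_induct)
    case base then show ?case using x by auto
  next
    case (step y y')
    have yb: "y \<in> board (Suc (Suc n))" "y' \<in> board (Suc (Suc n))" using step(2) assms(2) by auto
    have ab: "(0,n) \<notin> col n" "(1,n) \<notin> col n" by (auto simp: col_def)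
    have adj01: "adjacent (0,n) (1,n)" "adjacent (1,n) (0,n)" by (auto simp: adjacent_def)
    show ?case
    proof (cases "y \<in> col n")
      case True
      show ?thesis
      proof (cases "y' \<in> col n")
        case True then show ?thesis using step \<open>y \<in> col n\<close> by auto
      next
        case False
        have "y' = (0,n) \<or> y' = (1,n)"
          using adj_col[OF yb(2) False True adjacent_sym] step(2) by auto
        then show ?thesis using step(2,3) True False by auto
      qed
    next
      case False
      then have IH: "conn ?P x y" using step by auto
      show ?thesis
      proof (cases "y' \<in> col n")
        case True
        have yy: "y = (0,n) \<or> y = (1,n)" using adj_col[OF yb(1) False True] step(2) by auto
        have "conn ?P x z" if "z \<in> {(0,n),(1,n)} \<inter> P" for z
        proof (cases "z = y")
          case True then show ?thesis using IH by simp
        next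
          case False
          then have "adjacent y z" using yy that adj01 by auto
          then have "(\<lambda>a b. a \<in> ?P \<and> b \<in> ?P \<and> adjacent a b) y z"
            using that ab step(2) \<open>y \<notin> col n\<close> yy by auto
          then show ?thesis by (rule rtranclp.rtrancl_into_rtrancl[OF IH])
        qed
        then show ?thesis using True by (auto simp: col_def)
      next
        case False
        have "(\<lambda>a b. a \<in> ?P \<and> b \<in> ?P \<and> adjacent a b) y y'"
          using step(2) False \<open>y \<notin> col n\<close> by auto
        then show ?thesis using IH False by (auto intro: rtranclp.rtrancl_into_rtrancl)
      qed
    qed
  qed
  moreover have "conn P x y" using assms(1) x y unfolding is_piece_def by auto
  ultimately show "conn ?P x y" using y by blast
qed

lemma piece_exit:
  assumes "is_piece P" "P \<subseteq> board (Suc (Suc n))" "P \<inter> col n \<noteq> {}" "P - col n \<noteq> {}"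
  shows "(0,n) \<in> P \<or> (1,n) \<in> P"
proof -
  obtain x y where x: "x \<in> P \<inter> col n" and y: "y \<in> P - col n" using assms(3,4) by blast
  have "conn P x y" using assms(1) x y unfolding is_piece_def by auto
  have h: "y \<in> col n \<or> (0,n) \<in> P \<or> (1,n) \<in> P" if "conn P x y" for y
    using that
  proof (induction rule: rtranclp_induct)
    case base then show ?case using x by auto
  next
    case (step y y')
    show ?case
    proof (cases "y \<in> col n \<and> y' \<notin> col n")
      case True
      have "y' \<in> board (Suc (Suc n))" using step(2) assms(2) by auto
      then show ?thesis using adj_col[of y' n y] True step(2) adjacent_sym by blast
    next
      case False then show ?thesis using step by auto
    qed
  qed
  show ?thesis using h[OF \<open>conn P x y\<close>] y by blast
qed



definition hh :: "nat \<Rightarrow> (nat\<times>nat) set \<Rightarrow> (nat\<times>nat) set \<Rightarrow> (nat\<times>nat) set \<Rightarrow> (nat\<times>nat) set" where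
  "hh n X Y P = (if (0,n) \<in> P then X else {}) \<union> (if (1,n) \<in> P then Y else {})"

definition ext :: "nat \<Rightarrow> (nat\<times>nat) set \<Rightarrow> (nat\<times>nat) set \<Rightarrow> (nat\<times>nat) set set \<Rightarrow> (nat\<times>nat) set set \<Rightarrow> (nat\<times>nat) set set" where
  "ext n X Y N R = N \<union> (\<lambda>P. P \<union> hh n X Y P) ` R"

definition res :: "nat \<Rightarrow> (nat\<times>nat) set set \<Rightarrow> (nat\<times>nat) set set" where
  "res n Q = (\<lambda>P. P - col n) ` Q - {{}}"

lemma partition_on_iff:
  "partition_on A Q \<longleftrightarrow> (\<forall>P\<in>Q. P \<noteq> {} \<and> P \<subseteq> A) \<and> (\<forall>x\<in>A. \<exists>!P. P \<in> Q \<and> x \<in> P)"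
proof
  assume "partition_on A Q"
  then show "(\<forall>P\<in>Q. P \<noteq> {} \<and> P \<subseteq> A) \<and> (\<forall>x\<in>A. \<exists>!P. P \<in> Q \<and> x \<in> P)"
    unfolding partition_on_def disjoint_def by blast
next
  assume H: "(\<forall>P\<in>Q. P \<noteq> {} \<and> P \<subseteq> A) \<and> (\<forall>x\<in>A. \<exists>!P. P \<in> Q \<and> x \<in> P)"
  show "partition_on A Q"
  proof (rule partition_onI)
    show "\<Union>Q = A" using H by blast
    show "{} \<notin> Q" using H by blast
    fix p q assume "p \<in> Q" "q \<in> Q" "p \<noteq> q"
    then show "disjnt p q" using H unfolding disjnt_def by blast
  qed
qed

lemma part_unique: "partition_on A Q \<Longrightarrow> P \<in> Q \<Longrightarrow> P' \<in> Q \<Longrightarrow> x \<in> P \<Longrightarrow> x \<in> P' \<Longrightarrow> P = P'"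
  unfolding partition_on_def disjoint_def by blast

lemma part_sub: "partition_on A Q \<Longrightarrow> P \<in> Q \<Longrightarrow> P \<subseteq> A"
  unfolding partition_on_def by blast

lemma part_ne: "partition_on A Q \<Longrightarrow> P \<in> Q \<Longrightarrow> P \<noteq> {}"
  unfolding partition_on_def by blast

lemma part_ex: "partition_on A Q \<Longrightarrow> x \<in> A \<Longrightarrow> \<exists>P\<in>Q. x \<in> P"
  unfolding partition_on_def by blast

lemma hh_sub: "X \<subseteq> col n \<Longrightarrow> Y \<subseteq> col n \<Longrightarrow> hh n X Y P \<subseteq> col n"
  by (auto simp: hh_def)

lemma ext_minus:
  assumes "P \<subseteq> board (Suc n)" "X \<subseteq> col n" "Y \<subseteq> col n"
  shows "(P \<union> hh n X Y P) - col n = P"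
  using assms board_col(2)[of n] hh_sub[OF assms(2,3), of P] by blast

lemma res_ext:
  assumes R: "\<forall>P\<in>R. P \<noteq> {} \<and> P \<subseteq> board (Suc n)" and N: "\<forall>Z\<in>N. Z \<subseteq> col n"
    and XY: "X \<subseteq> col n" "Y \<subseteq> col n"
  shows "res n (ext n X Y N R) = R"
proof -
  have 1: "(\<lambda>P. P - col n) ` (\<lambda>P. P \<union> hh n X Y P) ` R = R"
    using ext_minus[OF _ XY] R by (force simp: image_image)
  have 2: "(\<lambda>P. P - col n) ` N \<subseteq> {{}}" using N by auto
  have 3: "{} \<notin> R" using R by auto
  have e: "res n (ext n X Y N R) = ((\<lambda>P. P - col n) ` N \<union> R) - {{}}"
    unfolding res_def ext_def image_Un 1 ..
  show ?thesis unfolding e using 2 3 by blast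
qed

lemma inj_ext:
  assumes "\<forall>R\<in>S. \<forall>P\<in>R. P \<noteq> {} \<and> P \<subseteq> board (Suc n)" "\<forall>Z\<in>N. Z \<subseteq> col n" "X \<subseteq> col n" "Y \<subseteq> col n"
  shows "inj_on (ext n X Y N) S"
proof (rule inj_on_inverseI[where g = "res n"])
  fix R assume "R \<in> S"
  then show "res n (ext n X Y N R) = R" using assms by (intro res_ext) auto
qed

lemma ext_col_mem:
  assumes R: "\<forall>P\<in>R. P \<noteq> {} \<and> P \<subseteq> board (Suc n)" and "Z \<subseteq> col n"
  shows "Z \<in> ext n X Y N R \<longleftrightarrow> Z \<in> N"
proof -
  have "Z \<noteq> P \<union> hh n X Y P" if "P \<in> R" for P
    using R that assms(2) board_col(2)[of n] by blast
  then show ?thesis unfolding ext_def by blast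
qed

lemma card_ext:
  assumes R: "\<forall>P\<in>R. P \<noteq> {} \<and> P \<subseteq> board (Suc n)" and N: "\<forall>Z\<in>N. Z \<subseteq> col n"
    and XY: "X \<subseteq> col n" "Y \<subseteq> col n" and fin: "finite R" "finite N"
  shows "card (ext n X Y N R) = card N + card R"
proof -
  have inj: "inj_on (\<lambda>P. P \<union> hh n X Y P) R"
    by (rule inj_on_inverseI[where g = "\<lambda>P. P - col n"]) (use ext_minus[OF _ XY] R in blast)
  have disj: "N \<inter> (\<lambda>P. P \<union> hh n X Y P) ` R = {}"
    using ext_col_mem[OF R] N unfolding ext_def by blast
  show ?thesis unfolding ext_def
    using card_Un_disjoint[OF fin(2) finite_imageI[OF fin(1)] disj] card_image[OF inj] by simp
qed



lemma ext_partition: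
  assumes R: "partition_on (board (Suc n)) R"
    and N: "\<forall>Z\<in>N. Z \<noteq> {} \<and> Z \<subseteq> col n" "disjoint N"
    and XY: "X \<subseteq> col n" "Y \<subseteq> col n" "X \<inter> Y = {}" "(X \<union> Y) \<inter> \<Union>N = {}" "X \<union> Y \<union> \<Union>N = col n"
  shows "partition_on (board (Suc (Suc n))) (ext n X Y N R)"
  unfolding partition_on_iff
proof (rule conjI[OF ballI ballI])
  have Rs: "P \<noteq> {} \<and> P \<subseteq> board (Suc n)" if "P \<in> R" for P
    using R that by (auto simp: partition_on_iff)
  fix P assume "P \<in> ext n X Y N R"
  then show "P \<noteq> {} \<and> P \<subseteq> board (Suc (Suc n))"
    unfolding ext_def using Rs N(1) hh_sub[OF XY(1,2)] board_col(1)[of n] by blast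
next
  have Rs: "P \<noteq> {} \<and> P \<subseteq> board (Suc n)" if "P \<in> R" for P
    using R that by (auto simp: partition_on_iff)
  have a0: "(0,n) \<in> board (Suc n)" and b0: "(1,n) \<in> board (Suc n)" by (auto simp: board_def)
  fix x assume x: "x \<in> board (Suc (Suc n))"
  show "\<exists>!P. P \<in> ext n X Y N R \<and> x \<in> P"
  proof (cases "x \<in> col n")
    case False
    then have xb: "x \<in> board (Suc n)" using x board_col(1)[of n] by blast
    obtain P where P: "P \<in> R" "x \<in> P" using part_ex[OF R xb] by blast
    show ?thesis
    proof (rule ex1I[of _ "P \<union> hh n X Y P"])
      show "P \<union> hh n X Y P \<in> ext n X Y N R \<and> x \<in> P \<union> hh n X Y P" using P unfolding ext_def by blast
    next
      fix Z assume Z: "Z \<in> ext n X Y N R \<and> x \<in> Z"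
      then have "Z \<notin> N" using N(1) False by blast
      then obtain P' where P': "P' \<in> R" "Z = P' \<union> hh n X Y P'" using Z unfolding ext_def by blast
      then have "x \<in> P'" using Z False hh_sub[OF XY(1,2)] by blast
      then have "P' = P" using part_unique[OF R P'(1) P(1) _ P(2)] by blast
      then show "Z = P \<union> hh n X Y P" using P' by simp
    qed
  next
    case True
    show ?thesis
    proof (cases "x \<in> \<Union>N")
      case True
      then obtain Z where Z: "Z \<in> N" "x \<in> Z" by blast
      show ?thesis
      proof (rule ex1I[of _ Z])
        show "Z \<in> ext n X Y N R \<and> x \<in> Z" using Z by (simp add: ext_def)
      next
        fix Z' assume Z': "Z' \<in> ext n X Y N R \<and> x \<in> Z'"
        have "Z' \<in> N"
        proof (rule ccontr)
          assume "Z' \<notin> N"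
          then obtain P' where P': "P' \<in> R" "Z' = P' \<union> hh n X Y P'" using Z' unfolding ext_def by blast
          have "x \<notin> P'" using Rs[OF P'(1)] board_col(2)[of n] \<open>x \<in> col n\<close> by blast
          then have "x \<in> X \<union> Y" using Z' P' by (auto simp: hh_def split: if_splits)
          then show False using XY(4) True by blast
        qed
        then show "Z' = Z" using N(2) Z Z' unfolding disjoint_def by blast
      qed
    next
      case False
      then have xXY: "x \<in> X \<union> Y" using XY(5) \<open>x \<in> col n\<close> by blast
      show ?thesis
      proof (cases "x \<in> X")
        case True
        obtain P where P: "P \<in> R" "(0,n) \<in> P" using part_ex[OF R a0] by blast
        show ?thesis
        proof (rule ex1I[of _ "P \<union> hh n X Y P"])
          show "P \<union> hh n X Y P \<in> ext n X Y N R \<and> x \<in> P \<union> hh n X Y P"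
          proof -
            have "x \<in> hh n X Y P" using P True by (simp add: hh_def)
            then show ?thesis using P(1) unfolding ext_def by blast
          qed
        next
          fix Z assume Z: "Z \<in> ext n X Y N R \<and> x \<in> Z"
          then have "Z \<notin> N" using False by blast
          then obtain P' where P': "P' \<in> R" "Z = P' \<union> hh n X Y P'" using Z unfolding ext_def by blast
          have "x \<notin> P'" using Rs[OF P'(1)] board_col(2)[of n] \<open>x \<in> col n\<close> by blast
          then have "(0,n) \<in> P'" using Z P' True XY(3) by (auto simp: hh_def split: if_splits)
          then have "P' = P" using part_unique[OF R P'(1) P(1) _ P(2)] by blast
          then show "Z = P \<union> hh n X Y P" using P' by simp
        qed
      next
        case False
        then have xY: "x \<in> Y" using xXY by blast
        obtain P where P: "P \<in> R" "(1,n) \<in> P" using part_ex[OF R b0] by blast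
        show ?thesis
        proof (rule ex1I[of _ "P \<union> hh n X Y P"])
          show "P \<union> hh n X Y P \<in> ext n X Y N R \<and> x \<in> P \<union> hh n X Y P"
          proof -
            have "x \<in> hh n X Y P" using P xY by (simp add: hh_def)
            then show ?thesis using P(1) unfolding ext_def by blast
          qed
        next
          fix Z assume Z: "Z \<in> ext n X Y N R \<and> x \<in> Z"
          then have "Z \<notin> N" using \<open>x \<notin> \<Union>N\<close> by blast
          then obtain P' where P': "P' \<in> R" "Z = P' \<union> hh n X Y P'" using Z unfolding ext_def by blast
          have "x \<notin> P'" using Rs[OF P'(1)] board_col(2)[of n] \<open>x \<in> col n\<close> by blast
          then have "(1,n) \<in> P'" using Z P' False by (auto simp: hh_def split: if_splits)
          then have "P' = P" using part_unique[OF R P'(1) P(1) _ P(2)] by blast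
          then show "Z = P \<union> hh n X Y P" using P' by simp
        qed
      qed
    qed
  qed
qed



lemma piece_ext1:
  assumes "is_piece P"
  shows "(0,n) \<in> P \<Longrightarrow> is_piece (P \<union> {(0,Suc n)})"
    and "(0,n) \<in> P \<Longrightarrow> is_piece (P \<union> col n)"
    and "(1,n) \<in> P \<Longrightarrow> is_piece (P \<union> {(1,Suc n)})"
    and "(1,n) \<in> P \<Longrightarrow> is_piece (P \<union> col n)"
proof -
  have A: "adjacent (0,n) (0,Suc n)" "adjacent (1,n) (1,Suc n)" "adjacent (0,Suc n) (1,Suc n)"
      "adjacent (1,Suc n) (0,Suc n)"
    by (auto simp: adjacent_def)
  show "(0,n) \<in> P \<Longrightarrow> is_piece (P \<union> {(0,Suc n)})"
    using piece_insert[OF assms _ A(1)] by simp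
  show "(1,n) \<in> P \<Longrightarrow> is_piece (P \<union> {(1,Suc n)})"
    using piece_insert[OF assms _ A(2)] by simp
  show "(0,n) \<in> P \<Longrightarrow> is_piece (P \<union> col n)"
    using piece_insert[OF piece_insert[OF assms _ A(1)] _ A(3)] by (simp add: col_def insert_commute)
  show "(1,n) \<in> P \<Longrightarrow> is_piece (P \<union> col n)"
    using piece_insert[OF piece_insert[OF assms _ A(2)] _ A(4)] by (simp add: col_def insert_commute)
qed

lemma ext_pieces:
  assumes R: "\<forall>P\<in>R. is_piece P"
    and X: "X = {} \<or> X = {(0,Suc n)} \<or> X = col n" and Y: "Y = {} \<or> Y = {(1,Suc n)} \<or> Y = col n"
    and N: "N \<subseteq> {{(0,Suc n)}, {(1,Suc n)}, col n}"
  shows "\<forall>Z\<in>ext n X Y N R. is_piece Z"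
proof
  fix Z assume "Z \<in> ext n X Y N R"
  then consider "Z \<in> N" | P where "P \<in> R" "Z = P \<union> hh n X Y P" unfolding ext_def by blast
  then show "is_piece Z"
  proof cases
    case 1
    have "adjacent (0,Suc n) (1,Suc n)" by (auto simp: adjacent_def)
    then show ?thesis using 1 N piece_single piece_pair by (auto simp: col_def)
  next
    case 2
    have P: "is_piece P" using R 2(1) by blast
    have cu: "{(0, Suc n)} \<union> {(1, Suc n)} = col n" by (auto simp: col_def)
    have "hh n X Y P = {} \<or> (hh n X Y P = {(0,Suc n)} \<and> (0,n) \<in> P) \<or> (hh n X Y P = {(1,Suc n)} \<and> (1,n) \<in> P)
       \<or> (hh n X Y P = col n \<and> ((0,n) \<in> P \<or> (1,n) \<in> P))"
      using X Y by (auto simp: hh_def col_def)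
    then show ?thesis using 2(2) piece_ext1[OF P] P by auto
  qed
qed

lemma ext_decomp:
  assumes H: "\<forall>P\<in>Q. \<not> P \<subseteq> col n \<longrightarrow> P \<inter> col n = hh n X Y P"
  shows "Q = ext n X Y {P\<in>Q. P \<subseteq> col n} (res n Q)"
proof -
  have hc: "hh n X Y (P - col n) = hh n X Y P" for P
    by (simp add: hh_def col_def)
  show ?thesis
  proof
    show "Q \<subseteq> ext n X Y {P\<in>Q. P \<subseteq> col n} (res n Q)"
    proof
      fix P assume P: "P \<in> Q"
      show "P \<in> ext n X Y {P\<in>Q. P \<subseteq> col n} (res n Q)"
      proof (cases "P \<subseteq> col n")
        case True then show ?thesis using P by (simp add: ext_def)
      next
        case False
        then have "P = (P - col n) \<union> hh n X Y (P - col n)" using H P hc by blast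
        moreover have "P - col n \<in> res n Q" using P False by (auto simp: res_def)
        ultimately show ?thesis unfolding ext_def by blast
      qed
    qed
  next
    show "ext n X Y {P\<in>Q. P \<subseteq> col n} (res n Q) \<subseteq> Q"
    proof
      fix Z assume "Z \<in> ext n X Y {P\<in>Q. P \<subseteq> col n} (res n Q)"
      then consider "Z \<in> Q" | P where "P \<in> Q" "P - col n \<noteq> {}" "Z = (P - col n) \<union> hh n X Y (P - col n)"
        unfolding ext_def res_def by blast
      then show "Z \<in> Q"
      proof cases
        case 2
        then have "Z = P" using H hc by blast
        then show ?thesis using 2 by simp
      qed simp
    qed
  qed
qed

lemma res_partition:
  assumes Q: "partition_on (board (Suc (Suc n))) Q"
  shows "partition_on (board (Suc n)) (res n Q)"
  unfolding partition_on_iff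
proof (rule conjI[OF ballI ballI])
  fix P assume "P \<in> res n Q"
  then obtain P' where P': "P' \<in> Q" "P = P' - col n" "P \<noteq> {}" unfolding res_def by blast
  have "P' \<subseteq> board (Suc (Suc n))" using part_sub[OF Q P'(1)] .
  then show "P \<noteq> {} \<and> P \<subseteq> board (Suc n)"
    using P' board_col(1)[of n] by blast
next
  fix x assume x: "x \<in> board (Suc n)"
  then have xc: "x \<notin> col n" "x \<in> board (Suc (Suc n))" using board_col[of n] by auto
  obtain P where P: "P \<in> Q" "x \<in> P" using part_ex[OF Q xc(2)] by blast
  show "\<exists>!P. P \<in> res n Q \<and> x \<in> P"
  proof (rule ex1I[of _ "P - col n"])
    show "P - col n \<in> res n Q \<and> x \<in> P - col n" using P xc by (auto simp: res_def)
  next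
    fix Z assume "Z \<in> res n Q \<and> x \<in> Z"
    then obtain P' where "P' \<in> Q" "Z = P' - col n" "x \<in> P'" unfolding res_def by blast
    then show "Z = P - col n" using part_unique[OF Q _ P(1) _ P(2)] by blast
  qed
qed

lemma res_pieces:
  assumes Q: "partition_on (board (Suc (Suc n))) Q" and pc: "\<forall>P\<in>Q. is_piece P"
  shows "\<forall>P\<in>res n Q. is_piece P"
  using piece_restrict pc part_sub[OF Q] unfolding res_def by blast

lemma finite_part: "partition_on (board m) Q \<Longrightarrow> finite Q"
proof -
  assume "partition_on (board m) Q"
  then have "Q \<subseteq> Pow (board m)" using part_sub by blast
  moreover have "finite (board m)" by (simp add: board_def)
  ultimately show "finite Q" by (meson finite_Pow_iff finite_subset)
qed

lemma finite_divisions: "finite (divisions k m)"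
proof -
  have "divisions k m \<subseteq> Pow (Pow (board m))"
    unfolding divisions_def using part_sub by blast
  moreover have "finite (board m)" by (simp add: board_def)
  ultimately show ?thesis by (meson finite_Pow_iff finite_subset)
qed



lemma div_ok: "R \<in> divisions k m \<Longrightarrow> \<forall>P\<in>R. P \<noteq> {} \<and> P \<subseteq> board m"
  unfolding divisions_def partition_on_iff by blast

lemma div_part: "R \<in> divisions k m \<Longrightarrow> partition_on (board m) R"
  unfolding divisions_def by blast

lemma ext_div:
  assumes R: "R \<in> divisions k' (Suc n)"
    and N: "\<forall>Z\<in>N. Z \<noteq> {} \<and> Z \<subseteq> col n" "disjoint N"
    and XY: "X \<subseteq> col n" "Y \<subseteq> col n" "X \<inter> Y = {}" "(X \<union> Y) \<inter> \<Union>N = {}" "X \<union> Y \<union> \<Union>N = col n"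
    and X: "X = {} \<or> X = {(0,Suc n)} \<or> X = col n" and Y: "Y = {} \<or> Y = {(1,Suc n)} \<or> Y = col n"
    and N2: "N \<subseteq> {{(0,Suc n)}, {(1,Suc n)}, col n}" and k: "card N + k' = k"
  shows "ext n X Y N R \<in> divisions k (Suc (Suc n))"
proof -
  have fN: "finite N" using N2 finite_subset by blast
  have p: "partition_on (board (Suc n)) R" and pc: "\<forall>P\<in>R. is_piece P" and cR: "card R = k'"
    using R unfolding divisions_def by auto
  have fR: "finite R" using finite_part[OF p] .
  have "partition_on (board (Suc (Suc n))) (ext n X Y N R)"
    by (rule ext_partition[OF p N XY])
  moreover have "\<forall>Z\<in>ext n X Y N R. is_piece Z" by (rule ext_pieces[OF pc X Y N2])
  moreover have "card (ext n X Y N R) = k"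
    using card_ext[OF div_ok[OF R] _ XY(1,2) fR fN] N(1) cR k by auto
  ultimately show ?thesis unfolding divisions_def by blast
qed

lemma res_div:
  assumes Q: "Q \<in> divisions k (Suc (Suc n))"
    and H: "\<forall>P\<in>Q. \<not> P \<subseteq> col n \<longrightarrow> P \<inter> col n = hh n X Y P"
    and XY: "X \<subseteq> col n" "Y \<subseteq> col n"
  shows "Q = ext n X Y {P\<in>Q. P \<subseteq> col n} (res n Q)"
    and "res n Q \<in> divisions (k - card {P\<in>Q. P \<subseteq> col n}) (Suc n)"
proof -
  have p: "partition_on (board (Suc (Suc n))) Q" and pc: "\<forall>P\<in>Q. is_piece P" and cQ: "card Q = k"
    using Q unfolding divisions_def by auto
  show e: "Q = ext n X Y {P\<in>Q. P \<subseteq> col n} (res n Q)" by (rule ext_decomp[OF H])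
  have rp: "partition_on (board (Suc n)) (res n Q)" by (rule res_partition[OF p])
  have fQ: "finite Q" using finite_part[OF p] .
  have "card Q = card {P\<in>Q. P \<subseteq> col n} + card (res n Q)"
    by (subst e) (rule card_ext, use rp partition_on_iff in blast, auto simp: XY fQ finite_part[OF rp])
  then have "card (res n Q) = k - card {P\<in>Q. P \<subseteq> col n}" using cQ by simp
  then show "res n Q \<in> divisions (k - card {P\<in>Q. P \<subseteq> col n}) (Suc n)"
    unfolding divisions_def using rp res_pieces[OF p pc] by blast
qed

definition Jn :: "nat \<Rightarrow> nat \<Rightarrow> (nat \<times> nat) set set set" where
  "Jn k m = {Q \<in> divisions k m. \<exists>P\<in>Q. (0, m - 1) \<in> P \<and> (1, m - 1) \<in> P}"
definition Sp :: "nat \<Rightarrow> nat \<Rightarrow> (nat \<times> nat) set set set" where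
  "Sp k m = {Q \<in> divisions k m. \<not> (\<exists>P\<in>Q. (0, m - 1) \<in> P \<and> (1, m - 1) \<in> P)}"

lemma s_Sp: "s k m = card (Sp k m)" by (simp add: s_def Sp_def)

lemma d_split: "d k m = card (Jn k m) + card (Sp k m)"
proof -
  have "divisions k m = Jn k m \<union> Sp k m" "Jn k m \<inter> Sp k m = {}" by (auto simp: Jn_def Sp_def)
  moreover have "finite (Jn k m)" "finite (Sp k m)"
    using finite_divisions[of k m] by (auto simp: Jn_def Sp_def)
  ultimately show ?thesis unfolding d_def by (simp add: card_Un_disjoint)
qed


lemma col_simps: "(0,Suc n) \<in> col n" "(1,Suc n) \<in> col n" "(0,n) \<notin> col n" "(1,n) \<notin> col n"
  by (auto simp: col_def)

lemma a0b0: "(0,n) \<in> board (Suc n)" "(1,n) \<in> board (Suc n)" by (auto simp: board_def)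

lemma Jn_eq:
  assumes k: "k \<ge> 1"
  shows "Jn k (Suc (Suc n)) = ext n {} {} {col n} ` divisions (k-1) (Suc n)
     \<union> ext n (col n) {} {} ` divisions k (Suc n) \<union> ext n {} (col n) {} ` Sp k (Suc n)"
    (is "?L = ?A \<union> ?B \<union> ?C")
proof
  show "?A \<union> ?B \<union> ?C \<subseteq> ?L"
  proof (intro Un_least subsetI)
    fix Q assume "Q \<in> ?A"
    then obtain R where R: "R \<in> divisions (k-1) (Suc n)" "Q = ext n {} {} {col n} R" by blast
    have "Q \<in> divisions k (Suc (Suc n))" unfolding R(2)
      by (rule ext_div[OF R(1)]) (use k in \<open>auto simp: col_def disjoint_def\<close>)
    moreover have "col n \<in> Q" by (simp add: R(2) ext_def)
    ultimately show "Q \<in> ?L" unfolding Jn_def by (auto simp: col_def)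
  next
    fix Q assume "Q \<in> ?B"
    then obtain R where R: "R \<in> divisions k (Suc n)" "Q = ext n (col n) {} {} R" by blast
    have "Q \<in> divisions k (Suc (Suc n))" unfolding R(2)
      by (rule ext_div[OF R(1)]) (auto simp: col_def disjoint_def)
    moreover obtain P where P: "P \<in> R" "(0,n) \<in> P" using part_ex[OF div_part[OF R(1)] a0b0(1)] by blast
    then have "P \<union> col n \<in> Q" unfolding R(2) ext_def hh_def by force
    ultimately show "Q \<in> ?L" unfolding Jn_def by (auto simp: col_def)
  next
    fix Q assume "Q \<in> ?C"
    then obtain R where R: "R \<in> Sp k (Suc n)" "Q = ext n {} (col n) {} R" by blast
    have R1: "R \<in> divisions k (Suc n)" using R(1) by (simp add: Sp_def)
    have "Q \<in> divisions k (Suc (Suc n))" unfolding R(2)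
      by (rule ext_div[OF R1]) (auto simp: col_def disjoint_def)
    moreover obtain P where P: "P \<in> R" "(1,n) \<in> P" using part_ex[OF div_part[OF R1] a0b0(2)] by blast
    then have "P \<union> col n \<in> Q" unfolding R(2) ext_def hh_def by force
    ultimately show "Q \<in> ?L" unfolding Jn_def by (auto simp: col_def)
  qed
next
  show "?L \<subseteq> ?A \<union> ?B \<union> ?C"
  proof
    fix Q assume "Q \<in> ?L"
    then have Q: "Q \<in> divisions k (Suc (Suc n))" and "\<exists>P\<in>Q. (0, Suc n) \<in> P \<and> (1, Suc n) \<in> P"
      unfolding Jn_def by auto
    then obtain P where P: "P \<in> Q" "(0, Suc n) \<in> P" "(1, Suc n) \<in> P" by blast
    have p: "partition_on (board (Suc (Suc n))) Q" using div_part[OF Q] .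
    have cP: "col n \<subseteq> P" using P by (auto simp: col_def)
    have other: "P' \<inter> col n = {}" if "P' \<in> Q" "P' \<noteq> P" for P'
      using part_unique[OF p that(1) P(1)] that(2) P(2,3) by (auto simp: col_def)
    have N: "{P'\<in>Q. P' \<subseteq> col n} = (if P = col n then {col n} else {})"
    proof -
      have e: "P' = P" if "P' \<in> Q" "P' \<subseteq> col n" for P'
        using other[OF that(1)] part_ne[OF p that(1)] that(2) by blast
      show ?thesis
      proof (cases "P = col n")
        case True then show ?thesis using e P(1) by auto
      next
        case False
        then have "\<not> P \<subseteq> col n" using cP by blast
        then show ?thesis using e False by auto
      qed
    qed
    consider "P = col n" | "P \<noteq> col n" "(0,n) \<in> P" | "P \<noteq> col n" "(0,n) \<notin> P" by blast
    then show "Q \<in> ?A \<union> ?B \<union> ?C"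
    proof cases
      case 1
      have H: "\<forall>P'\<in>Q. \<not> P' \<subseteq> col n \<longrightarrow> P' \<inter> col n = hh n {} {} P'"
        using other 1 by (auto simp: hh_def)
      note r = res_div[OF Q H]
      have "Q \<in> ?A" using r N 1 by (intro image_eqI[of _ _ "res n Q"]) auto
      then show ?thesis by blast
    next
      case 2
      have H: "\<forall>P'\<in>Q. \<not> P' \<subseteq> col n \<longrightarrow> P' \<inter> col n = hh n (col n) {} P'"
      proof (intro ballI impI)
        fix P' assume "P' \<in> Q" "\<not> P' \<subseteq> col n"
        show "P' \<inter> col n = hh n (col n) {} P'"
        proof (cases "P' = P")
          case True then show ?thesis using 2 cP by (auto simp: hh_def)
        next
          case False
          then have "(0,n) \<notin> P'" using part_unique[OF p \<open>P' \<in> Q\<close> P(1)] 2 by blast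
          then show ?thesis using other[OF \<open>P' \<in> Q\<close> False] by (simp add: hh_def)
        qed
      qed
      note r = res_div[OF Q H]
      have "Q \<in> ?B" using r N 2 by (intro image_eqI[of _ _ "res n Q"]) (auto simp: col_def)
      then show ?thesis by blast
    next
      case 3
      have "P - col n \<noteq> {}" using 3(1) cP by blast
      then have b0: "(1,n) \<in> P"
        using piece_exit[of P n] 3(2) P(1,2) Q part_sub[OF p] unfolding divisions_def by (auto simp: col_def)
      have H: "\<forall>P'\<in>Q. \<not> P' \<subseteq> col n \<longrightarrow> P' \<inter> col n = hh n {} (col n) P'"
      proof (intro ballI impI)
        fix P' assume "P' \<in> Q" "\<not> P' \<subseteq> col n"
        show "P' \<inter> col n = hh n {} (col n) P'"
        proof (cases "P' = P")
          case True then show ?thesis using 3 b0 cP by (auto simp: hh_def)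
        next
          case False
          then have "(1,n) \<notin> P'" using part_unique[OF p \<open>P' \<in> Q\<close> P(1)] b0 by blast
          then show ?thesis using other[OF \<open>P' \<in> Q\<close> False] by (simp add: hh_def)
        qed
      qed
      note r = res_div[OF Q H]
      have rd: "res n Q \<in> divisions k (Suc n)" using r(2) N 3 by (auto simp: col_def)
      have "\<not> (\<exists>P''\<in>res n Q. (0, n) \<in> P'' \<and> (1, n) \<in> P'')"
      proof
        assume "\<exists>P''\<in>res n Q. (0, n) \<in> P'' \<and> (1, n) \<in> P''"
        then obtain P'' where "P'' \<in> Q" "(0,n) \<in> P''" "(1,n) \<in> P''" unfolding res_def by blast
        then show False using part_unique[OF p \<open>P'' \<in> Q\<close> P(1) _ b0] 3(2) by blast
      qed
      then have "res n Q \<in> Sp k (Suc n)" using rd by (simp add: Sp_def)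
      then have "Q \<in> ?C" using r N 3 by (intro image_eqI[of _ _ "res n Q"]) (auto simp: col_def)
      then show ?thesis by blast
    qed
  qed
qed


lemma Sp_sub: "Sp k m \<subseteq> divisions k m" by (auto simp: Sp_def)

lemma inj_ext_div:
  assumes "S \<subseteq> divisions j (Suc n)" "\<forall>Z\<in>N. Z \<subseteq> col n" "X \<subseteq> col n" "Y \<subseteq> col n"
  shows "inj_on (ext n X Y N) S"
proof (rule inj_ext)
  show "\<forall>R\<in>S. \<forall>P\<in>R. P \<noteq> {} \<and> P \<subseteq> board (Suc n)" using assms(1) div_ok by blast
qed (use assms in auto)

lemma card_img:
  assumes "S \<subseteq> divisions j (Suc n)" "\<forall>Z\<in>N. Z \<subseteq> col n" "X \<subseteq> col n" "Y \<subseteq> col n"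
  shows "card (ext n X Y N ` S) = card S"
  by (rule card_image[OF inj_ext_div[OF assms]])

lemma Jn_card:
  assumes k: "k \<ge> 1"
  shows "card (Jn k (Suc (Suc n))) = d (k-1) (Suc n) + d k (Suc n) + s k (Suc n)"
proof -
  let ?A = "ext n {} {} {col n} ` divisions (k-1) (Suc n)"
  let ?B = "ext n (col n) {} {} ` divisions k (Suc n)"
  let ?C = "ext n {} (col n) {} ` Sp k (Suc n)"
  have cA: "card ?A = d (k-1) (Suc n)" unfolding d_def by (rule card_img) auto
  have cB: "card ?B = d k (Suc n)" unfolding d_def by (rule card_img) auto
  have cC: "card ?C = s k (Suc n)" unfolding s_Sp by (rule card_img[OF Sp_sub]) auto
  have fin: "finite ?A" "finite ?B" "finite ?C"
    using finite_divisions finite_subset[OF Sp_sub finite_divisions] by auto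
  have colA: "col n \<in> Q" if "Q \<in> ?A" for Q using that by (auto simp: ext_def)
  have colB: "col n \<notin> Q" if hQ: "Q \<in> ?B" for Q
  proof -
    obtain R where "R \<in> divisions k (Suc n)" "Q = ext n (col n) {} {} R" using hQ by blast
    then show ?thesis using ext_col_mem[OF div_ok[OF \<open>R \<in> divisions k (Suc n)\<close>] order_refl] by auto
  qed
  have colC: "col n \<notin> Q" if hQ: "Q \<in> ?C" for Q
  proof -
    obtain R where "R \<in> divisions k (Suc n)" "Q = ext n {} (col n) {} R" using hQ Sp_sub by blast
    then show ?thesis using ext_col_mem[OF div_ok[OF \<open>R \<in> divisions k (Suc n)\<close>] order_refl] by auto
  qed
  have BC: "?B \<inter> ?C = {}"
  proof (rule ccontr)
    assume "?B \<inter> ?C \<noteq> {}"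
    then obtain R R' where R: "R \<in> divisions k (Suc n)" and R': "R' \<in> Sp k (Suc n)"
      and eq: "ext n (col n) {} {} R = ext n {} (col n) {} R'" by blast
    have R'd: "R' \<in> divisions k (Suc n)" using R' Sp_sub by blast
    have "R = R'" using res_ext[OF div_ok[OF R], of "{}" "col n" "{}"] res_ext[OF div_ok[OF R'd], of "{}" "{}" "col n"] eq
      by auto
    obtain P where P: "P \<in> R" "(0,n) \<in> P" using part_ex[OF div_part[OF R] a0b0(1)] by blast
    have "P \<union> hh n (col n) {} P = P \<union> col n" using P(2) by (simp add: hh_def)
    then have "P \<union> col n \<in> ext n (col n) {} {} R" unfolding ext_def
      by (intro UnI2 image_eqI[where x = P]) (use P(1) in auto)
    then have "P \<union> col n \<in> ext n {} (col n) {} R'" using eq by simp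
    then obtain P' where P': "P' \<in> R'" "P \<union> col n = P' \<union> hh n {} (col n) P'" unfolding ext_def by blast
    have Pb: "P \<subseteq> board (Suc n)" "P' \<subseteq> board (Suc n)" using div_ok[OF R] div_ok[OF R'd] P P' by auto
    have "P' = P"
      using ext_minus[OF Pb(2), of "{}" "col n"] ext_minus[OF Pb(1), of "col n" "{}"] P'(2) P(2)
      by (auto simp: hh_def)
    then have "(1,n) \<in> P" using P'(2) Pb(1) board_col(2)[of n]
      by (auto simp: hh_def col_def split: if_splits)
    then show False using R' P \<open>R = R'\<close> by (auto simp: Sp_def)
  qed
  have "card (Jn k (Suc (Suc n))) = card (?A \<union> ?B \<union> ?C)" using Jn_eq[OF k] by simp
  also have "\<dots> = card ?A + card ?B + card ?C"
  proof -
    have "(?A \<union> ?B) \<inter> ?C = {}" using BC colA colC by blast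
    moreover have "?A \<inter> ?B = {}" using colA colB by blast
    ultimately show ?thesis using fin by (simp add: card_Un_disjoint)
  qed
  finally show ?thesis using cA cB cC by simp
qed


lemma ext_both:
  assumes "\<forall>P\<in>R. P \<subseteq> board (Suc n)" "Z \<in> ext n X Y N R" "(0,Suc n) \<in> Z" "(1,Suc n) \<in> Z"
  shows "Z \<in> N \<or> (\<exists>P\<in>R. (0,Suc n) \<in> hh n X Y P \<and> (1,Suc n) \<in> hh n X Y P)"
proof -
  have "(0,Suc n) \<notin> P \<and> (1,Suc n) \<notin> P" if "P \<in> R" for P
  proof -
    have "P \<subseteq> board (Suc n)" using assms(1) that by blast
    then show ?thesis by (auto simp: board_def)
  qed
  then show ?thesis using assms(2-4) unfolding ext_def by blast
qed

lemma filt2: "{x\<in>{a,b}. P x} = (if P a then {a} else {}) \<union> (if P b then {b} else {})"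
  by auto

lemma Sp_eq:
  assumes k: "k \<ge> 2"
  shows "Sp k (Suc (Suc n)) =
      ext n {} {} {{(0,Suc n)},{(1,Suc n)}} ` divisions (k-2) (Suc n)
    \<union> ext n {(0,Suc n)} {} {{(1,Suc n)}} ` divisions (k-1) (Suc n)
    \<union> ext n {} {(1,Suc n)} {{(0,Suc n)}} ` divisions (k-1) (Suc n)
    \<union> ext n {(0,Suc n)} {(1,Suc n)} {} ` Sp k (Suc n)"
    (is "?L = ?A \<union> ?B \<union> ?C \<union> ?D")
proof
  have hA: "\<not> (\<exists>Z\<in>ext n X Y N R. (0,Suc n) \<in> Z \<and> (1,Suc n) \<in> Z)"
    if "R \<in> divisions j (Suc n)" "\<forall>Z\<in>N. \<not> ((0,Suc n) \<in> Z \<and> (1,Suc n) \<in> Z)"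
       "\<forall>P\<in>R. \<not> ((0,Suc n) \<in> hh n X Y P \<and> (1,Suc n) \<in> hh n X Y P)" for j X Y N R
    using ext_both[of R n] div_ok[OF that(1)] that(2,3) by blast
  show "?A \<union> ?B \<union> ?C \<union> ?D \<subseteq> ?L"
  proof (intro Un_least subsetI)
    fix Q assume "Q \<in> ?A"
    then obtain R where R: "R \<in> divisions (k-2) (Suc n)" "Q = ext n {} {} {{(0,Suc n)},{(1,Suc n)}} R" by blast
    have "Q \<in> divisions k (Suc (Suc n))" unfolding R(2)
      by (rule ext_div[OF R(1)]) (use k in \<open>auto simp: col_def disjoint_def\<close>)
    moreover have "\<not> (\<exists>Z\<in>Q. (0,Suc n) \<in> Z \<and> (1,Suc n) \<in> Z)"
      unfolding R(2) by (rule hA[OF R(1)]) (auto simp: hh_def)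
    ultimately show "Q \<in> ?L" unfolding Sp_def by auto
  next
    fix Q assume "Q \<in> ?B"
    then obtain R where R: "R \<in> divisions (k-1) (Suc n)" "Q = ext n {(0,Suc n)} {} {{(1,Suc n)}} R" by blast
    have "Q \<in> divisions k (Suc (Suc n))" unfolding R(2)
      by (rule ext_div[OF R(1)]) (use k in \<open>auto simp: col_def disjoint_def\<close>)
    moreover have "\<not> (\<exists>Z\<in>Q. (0,Suc n) \<in> Z \<and> (1,Suc n) \<in> Z)"
      unfolding R(2) by (rule hA[OF R(1)]) (auto simp: hh_def)
    ultimately show "Q \<in> ?L" unfolding Sp_def by auto
  next
    fix Q assume "Q \<in> ?C"
    then obtain R where R: "R \<in> divisions (k-1) (Suc n)" "Q = ext n {} {(1,Suc n)} {{(0,Suc n)}} R" by blast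
    have "Q \<in> divisions k (Suc (Suc n))" unfolding R(2)
      by (rule ext_div[OF R(1)]) (use k in \<open>auto simp: col_def disjoint_def\<close>)
    moreover have "\<not> (\<exists>Z\<in>Q. (0,Suc n) \<in> Z \<and> (1,Suc n) \<in> Z)"
      unfolding R(2) by (rule hA[OF R(1)]) (auto simp: hh_def)
    ultimately show "Q \<in> ?L" unfolding Sp_def by auto
  next
    fix Q assume "Q \<in> ?D"
    then obtain R where R: "R \<in> Sp k (Suc n)" "Q = ext n {(0,Suc n)} {(1,Suc n)} {} R" by blast
    have R1: "R \<in> divisions k (Suc n)" using R(1) by (simp add: Sp_def)
    have "Q \<in> divisions k (Suc (Suc n))" unfolding R(2)
      by (rule ext_div[OF R1]) (use k in \<open>auto simp: col_def disjoint_def\<close>)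
    moreover have "\<not> (\<exists>Z\<in>Q. (0,Suc n) \<in> Z \<and> (1,Suc n) \<in> Z)"
      unfolding R(2) by (rule hA[OF R1]) (use R(1) in \<open>auto simp: hh_def Sp_def\<close>)
    ultimately show "Q \<in> ?L" unfolding Sp_def by auto
  qed
next
  show "?L \<subseteq> ?A \<union> ?B \<union> ?C \<union> ?D"
  proof
    fix Q assume "Q \<in> ?L"
    then have Q: "Q \<in> divisions k (Suc (Suc n))" and spl: "\<not> (\<exists>P\<in>Q. (0, Suc n) \<in> P \<and> (1, Suc n) \<in> P)"
      unfolding Sp_def by auto
    have p: "partition_on (board (Suc (Suc n))) Q" using div_part[OF Q] .
    have pc: "\<forall>P\<in>Q. is_piece P" using Q unfolding divisions_def by blast
    define A1 where "A1 = {(0::nat, Suc n)}"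
    define B1 where "B1 = {(1::nat, Suc n)}"
    obtain PA where PA: "PA \<in> Q" "(0,Suc n) \<in> PA" using part_ex[OF p, of "(0,Suc n)"] by (auto simp: board_def)
    obtain PB where PB: "PB \<in> Q" "(1,Suc n) \<in> PB" using part_ex[OF p, of "(1,Suc n)"] by (auto simp: board_def)
    have nb: "(1,Suc n) \<notin> PA" "(0,Suc n) \<notin> PB" using spl PA PB by auto
    have cA: "PA \<inter> col n = A1" using PA nb by (auto simp: col_def A1_def)
    have cB: "PB \<inter> col n = B1" using PB nb by (auto simp: col_def B1_def)
    have AB: "PA \<noteq> PB" using nb PB by blast
    have other: "P' \<inter> col n = {}" if "P' \<in> Q" "P' \<noteq> PA" "P' \<noteq> PB" for P'
      using part_unique[OF p that(1) PA(1) _ PA(2)] part_unique[OF p that(1) PB(1) _ PB(2)] that(2,3)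
      by (auto simp: col_def)
    have fa: "(0,n) \<in> PA" if hA: "PA \<noteq> A1"
    proof -
      obtain y where y: "y \<in> PA" "adjacent (0,Suc n) y"
        using piece_neighbor[of PA "(0,Suc n)"] pc PA hA by (auto simp: A1_def)
      have "y \<in> board (Suc (Suc n))" using part_sub[OF p PA(1)] y(1) by blast
      then have "y = (0,n) \<or> y = (1,Suc n)" using y(2) by (auto simp: board_def adjacent_def)
      then show ?thesis using y(1) nb by auto
    qed
    have fb: "(1,n) \<in> PB" if hB: "PB \<noteq> B1"
    proof -
      obtain y where y: "y \<in> PB" "adjacent (1,Suc n) y"
        using piece_neighbor[of PB "(1,Suc n)"] pc PB hB by (auto simp: B1_def)
      have "y \<in> board (Suc (Suc n))" using part_sub[OF p PB(1)] y(1) by blast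
      then have "y = (1,n) \<or> y = (0,Suc n)" using y(2) by (auto simp: board_def adjacent_def)
      then show ?thesis using y(1) nb by auto
    qed
    define X where "X = (if PA = A1 then {} else A1)"
    define Y where "Y = (if PB = B1 then {} else B1)"
    have XY0: "A1 \<subseteq> col n" "B1 \<subseteq> col n" by (auto simp: A1_def B1_def col_def)
    have XY: "X \<subseteq> col n" "Y \<subseteq> col n" by (auto simp: X_def Y_def A1_def B1_def col_def)
    have H: "\<forall>P\<in>Q. \<not> P \<subseteq> col n \<longrightarrow> P \<inter> col n = hh n X Y P"
    proof (intro ballI impI)
      fix P assume P: "P \<in> Q" "\<not> P \<subseteq> col n"
      show "P \<inter> col n = hh n X Y P"
      proof (cases "P = PA")
        case True
        then have "PA \<noteq> A1" using P(2) by (auto simp: A1_def col_def)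
        then have "(0,n) \<in> PA" using fa by blast
        moreover have "(1,n) \<in> PA \<Longrightarrow> Y = {}"
          using fb part_unique[OF p PA(1) PB(1), of "(1,n)"] AB by (auto simp: Y_def)
        ultimately show ?thesis using True cA \<open>PA \<noteq> A1\<close> by (auto simp: hh_def X_def)
      next
        case False
        show ?thesis
        proof (cases "P = PB")
          case True
          then have "PB \<noteq> B1" using P(2) by (auto simp: B1_def col_def)
          then have "(1,n) \<in> PB" using fb by blast
          moreover have "(0,n) \<in> PB \<Longrightarrow> X = {}"
            using fa part_unique[OF p PA(1) PB(1), of "(0,n)"] AB by (auto simp: X_def)
          ultimately show ?thesis using True cB \<open>PB \<noteq> B1\<close> by (auto simp: hh_def Y_def)
        next
          case False2: False
          have "(0,n) \<in> P \<Longrightarrow> X = {}"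
            using fa part_unique[OF p P(1) PA(1), of "(0,n)"] \<open>P \<noteq> PA\<close> by (auto simp: X_def)
          moreover have "(1,n) \<in> P \<Longrightarrow> Y = {}"
            using fb part_unique[OF p P(1) PB(1), of "(1,n)"] False2 by (auto simp: Y_def)
          ultimately show ?thesis using other[OF P(1) False False2] by (auto simp: hh_def)
        qed
      qed
    qed
    note r = res_div[OF Q H XY]
    have Nset: "{P\<in>Q. P \<subseteq> col n} = (if PA = A1 then {A1} else {}) \<union> (if PB = B1 then {B1} else {})"
    proof -
      have "P = PA \<or> P = PB" if "P \<in> Q" "P \<subseteq> col n" for P
        using other[OF that(1)] part_ne[OF p that(1)] that(2) by blast
      then have e0: "{P\<in>Q. P \<subseteq> col n} = {P\<in>{PA,PB}. P \<subseteq> col n}" using PA(1) PB(1) by blast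
      have ea: "PA \<subseteq> col n \<longleftrightarrow> PA = A1" using cA XY0(1) by blast
      have eb: "PB \<subseteq> col n \<longleftrightarrow> PB = B1" using cB XY0(2) by blast
      have "{P\<in>Q. P \<subseteq> col n} = (if PA \<subseteq> col n then {PA} else {}) \<union> (if PB \<subseteq> col n then {PB} else {})"
        unfolding e0 filt2 ..
      also have "\<dots> = (if PA = A1 then {A1} else {}) \<union> (if PB = B1 then {B1} else {})"
        unfolding ea eb by auto
      finally show ?thesis .
    qed
    have A1B1: "A1 \<noteq> B1" by (simp add: A1_def B1_def)
    have rspl: "\<not> (\<exists>P''\<in>res n Q. (0, n) \<in> P'' \<and> (1, n) \<in> P'')" if "PA \<noteq> A1" "PB \<noteq> B1"
    proof
      assume "\<exists>P''\<in>res n Q. (0, n) \<in> P'' \<and> (1, n) \<in> P''"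
      then obtain P'' where "P'' \<in> Q" "(0,n) \<in> P''" "(1,n) \<in> P''" unfolding res_def by blast
      then show False using part_unique[OF p \<open>P'' \<in> Q\<close> PA(1) _ fa[OF that(1)]]
          part_unique[OF p \<open>P'' \<in> Q\<close> PB(1) _ fb[OF that(2)]] AB by blast
    qed
    consider "PA = A1" "PB = B1" | "PA \<noteq> A1" "PB = B1" | "PA = A1" "PB \<noteq> B1" | "PA \<noteq> A1" "PB \<noteq> B1"
      by blast
    then show "Q \<in> ?A \<union> ?B \<union> ?C \<union> ?D"
    proof cases
      case 1
      have N1: "{P\<in>Q. P \<subseteq> col n} = {{(0,Suc n)},{(1,Suc n)}}" using Nset 1 by (auto simp: A1_def B1_def)
      have "X = {}" "Y = {}" using 1 by (auto simp: X_def Y_def)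
      then have e: "Q = ext n {} {} {{(0,Suc n)},{(1,Suc n)}} (res n Q)" using r(1) N1 by simp
      have "card {P\<in>Q. P \<subseteq> col n} = 2" unfolding N1 by simp
      then have "res n Q \<in> divisions (k-2) (Suc n)" using r(2) by simp
      then have "Q \<in> ?A" using e by blast
      then show ?thesis by blast
    next
      case 2
      have N1: "{P\<in>Q. P \<subseteq> col n} = {{(1,Suc n)}}" using Nset 2 by (auto simp: A1_def B1_def)
      have "X = {(0,Suc n)}" "Y = {}" using 2 by (auto simp: X_def Y_def A1_def)
      then have e: "Q = ext n {(0,Suc n)} {} {{(1,Suc n)}} (res n Q)" using r(1) N1 by simp
      have "card {P\<in>Q. P \<subseteq> col n} = 1" unfolding N1 by simp
      then have "res n Q \<in> divisions (k-1) (Suc n)" using r(2) by simp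
      then have "Q \<in> ?B" using e by blast
      then show ?thesis by blast
    next
      case 3
      have N1: "{P\<in>Q. P \<subseteq> col n} = {{(0,Suc n)}}" using Nset 3 by (auto simp: A1_def B1_def)
      have "X = {}" "Y = {(1,Suc n)}" using 3 by (auto simp: X_def Y_def B1_def)
      then have e: "Q = ext n {} {(1,Suc n)} {{(0,Suc n)}} (res n Q)" using r(1) N1 by simp
      have "card {P\<in>Q. P \<subseteq> col n} = 1" unfolding N1 by simp
      then have "res n Q \<in> divisions (k-1) (Suc n)" using r(2) by simp
      then have "Q \<in> ?C" using e by blast
      then show ?thesis by blast
    next
      case 4
      have N1: "{P\<in>Q. P \<subseteq> col n} = {}" using Nset 4 by simp
      have "X = {(0,Suc n)}" "Y = {(1,Suc n)}" using 4 by (auto simp: X_def Y_def A1_def B1_def)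
      then have e: "Q = ext n {(0,Suc n)} {(1,Suc n)} {} (res n Q)" using r(1) N1 by simp
      have "res n Q \<in> divisions k (Suc n)" using r(2) N1 by simp
      then have "res n Q \<in> Sp k (Suc n)" using rspl[OF 4] by (simp add: Sp_def)
      then have "Q \<in> ?D" using e by blast
      then show ?thesis by blast
    qed
  qed
qed


lemma mem_sing:
  assumes "R \<in> divisions j (Suc n)" "Z \<subseteq> col n"
  shows "Z \<in> ext n X Y N R \<longleftrightarrow> Z \<in> N"
  by (rule ext_col_mem[OF div_ok[OF assms(1)] assms(2)])

lemma disj_by: "(\<And>x. x \<in> S \<Longrightarrow> p x) \<Longrightarrow> (\<And>x. x \<in> T \<Longrightarrow> \<not> p x) \<Longrightarrow> S \<inter> T = {}"
  by blast

lemma Sp_card: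
  assumes k: "k \<ge> 2"
  shows "card (Sp k (Suc (Suc n))) = d (k-2) (Suc n) + 2 * d (k-1) (Suc n) + s k (Suc n)"
proof -
  define A1 where "A1 = {(0::nat, Suc n)}"
  define B1 where "B1 = {(1::nat, Suc n)}"
  have A1c: "A1 \<subseteq> col n" and B1c: "B1 \<subseteq> col n" by (auto simp: A1_def B1_def col_def)
  have A1B1: "A1 \<noteq> B1" by (simp add: A1_def B1_def)
  let ?A = "ext n {} {} {A1,B1} ` divisions (k-2) (Suc n)"
  let ?B = "ext n A1 {} {B1} ` divisions (k-1) (Suc n)"
  let ?C = "ext n {} B1 {A1} ` divisions (k-1) (Suc n)"
  let ?D = "ext n A1 B1 {} ` Sp k (Suc n)"
  have eq: "Sp k (Suc (Suc n)) = ?A \<union> ?B \<union> ?C \<union> ?D" using Sp_eq[OF k, of n] by (simp add: A1_def B1_def)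
  have cA: "card ?A = d (k-2) (Suc n)" unfolding d_def by (rule card_img) (use A1c B1c in auto)
  have cB: "card ?B = d (k-1) (Suc n)" unfolding d_def by (rule card_img) (use A1c B1c in auto)
  have cC: "card ?C = d (k-1) (Suc n)" unfolding d_def by (rule card_img) (use A1c B1c in auto)
  have cD: "card ?D = s k (Suc n)" unfolding s_Sp by (rule card_img[OF Sp_sub]) (use A1c B1c in auto)
  have fin: "finite ?A" "finite ?B" "finite ?C" "finite ?D"
    using finite_divisions finite_subset[OF Sp_sub finite_divisions] by auto
  have mA: "A1 \<in> Q \<and> B1 \<in> Q" if hQ: "Q \<in> ?A" for Q
  proof -
    obtain R where R: "R \<in> divisions (k-2) (Suc n)" "Q = ext n {} {} {A1,B1} R" using hQ by blast
    show ?thesis unfolding R(2) mem_sing[OF R(1) A1c] mem_sing[OF R(1) B1c] using A1B1 by auto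
  qed
  have mB: "A1 \<notin> Q \<and> B1 \<in> Q" if hQ: "Q \<in> ?B" for Q
  proof -
    obtain R where R: "R \<in> divisions (k-1) (Suc n)" "Q = ext n A1 {} {B1} R" using hQ by blast
    show ?thesis unfolding R(2) mem_sing[OF R(1) A1c] mem_sing[OF R(1) B1c] using A1B1 by auto
  qed
  have mC: "A1 \<in> Q \<and> B1 \<notin> Q" if hQ: "Q \<in> ?C" for Q
  proof -
    obtain R where R: "R \<in> divisions (k-1) (Suc n)" "Q = ext n {} B1 {A1} R" using hQ by blast
    show ?thesis unfolding R(2) mem_sing[OF R(1) A1c] mem_sing[OF R(1) B1c] using A1B1 by auto
  qed
  have mD: "A1 \<notin> Q \<and> B1 \<notin> Q" if hQ: "Q \<in> ?D" for Q
  proof -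
    obtain R where R: "R \<in> divisions k (Suc n)" "Q = ext n A1 B1 {} R" using hQ Sp_sub by blast
    show ?thesis unfolding R(2) mem_sing[OF R(1) A1c] mem_sing[OF R(1) B1c] using A1B1 by auto
  qed
  have d1: "?A \<inter> ?B = {}"
    by (rule disj_by[where p = "\<lambda>Q. A1 \<in> Q"]) (metis mA, metis mB)
  have d2: "(?A \<union> ?B) \<inter> ?C = {}"
    by (rule disj_by[where p = "\<lambda>Q. B1 \<in> Q"]) (metis UnE mA mB, metis mC)
  have d3: "(?A \<union> ?B \<union> ?C) \<inter> ?D = {}"
    by (rule disj_by[where p = "\<lambda>Q. A1 \<in> Q \<or> B1 \<in> Q"]) (metis UnE mA mB mC, metis mD)
  have "card (Sp k (Suc (Suc n))) = card ?A + card ?B + card ?C + card ?D"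
    unfolding eq using fin d1 d2 d3 by (simp add: card_Un_disjoint)
  then show ?thesis using cA cB cC cD by simp
qed


lemma d0: "m \<ge> 1 \<Longrightarrow> d 0 m = 0"
proof -
  assume m: "m \<ge> 1"
  have "divisions 0 m = {}"
  proof (rule ccontr)
    assume "divisions 0 m \<noteq> {}"
    then obtain Q where Q: "Q \<in> divisions 0 m" by blast
    then have "finite Q" "card Q = 0" using finite_part[OF div_part[OF Q]] by (auto simp: divisions_def)
    then have "Q = {}" by simp
    moreover have "board m = \<Union>Q" using partition_onD1[OF div_part[OF Q]] .
    moreover have "(0,0) \<in> board m" using m by (auto simp: board_def)
    ultimately show False by simp
  qed
  then show ?thesis by (simp add: d_def)
qed

lemma s1: "m \<ge> 1 \<Longrightarrow> s 1 m = 0"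
proof -
  assume m: "m \<ge> 1"
  have "Sp 1 m = {}"
  proof (rule ccontr)
    assume "Sp 1 m \<noteq> {}"
    then obtain Q where Q: "Q \<in> divisions 1 m" and spl: "\<not> (\<exists>P\<in>Q. (0, m - 1) \<in> P \<and> (1, m - 1) \<in> P)"
      by (auto simp: Sp_def)
    then have "card Q = 1" by (simp add: divisions_def)
    then obtain P where P: "Q = {P}" by (rule card_1_singletonE)
    have "board m = \<Union>Q" using partition_onD1[OF div_part[OF Q]] .
    then have "P = board m" using P by simp
    moreover have "(0, m-1) \<in> board m" "(1, m-1) \<in> board m" using m by (auto simp: board_def)
    ultimately show False using spl P by auto
  qed
  then show ?thesis by (simp add: s_Sp)
qed

lemma d11: "d 1 1 \<ge> 1"
proof -
  have b1: "board 1 = {(0,0),(1,0)}" by (auto simp: board_def)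
  have "is_piece (board 1)" unfolding b1 by (rule piece_pair) (simp add: adjacent_def)
  moreover have "partition_on (board 1) {board 1}" by (rule partition_on_space) (auto simp: board_def)
  ultimately have "{board 1} \<in> divisions 1 1" by (simp add: divisions_def)
  then have "divisions 1 1 \<noteq> {}" by blast
  then show ?thesis using finite_divisions[of 1 1] by (simp add: d_def Suc_le_eq card_gt_0_iff)
qed

lemma recS:
  assumes "k \<ge> 2" "n \<ge> 1"
  shows "real (s k (Suc n)) = real (s k n) + (real (d (k-2) n) + 2 * real (d (k-1) n))"
proof -
  obtain m where n: "n = Suc m" using assms(2) by (cases n) auto
  show ?thesis using Sp_card[OF assms(1), of m] unfolding n s_Sp by simp
qed

lemma recT:
  assumes "k \<ge> 1" "n \<ge> 1"
  shows "real (d k (Suc n)) = real (s k (Suc n)) + real (d (k-1) n) + real (d k n) + real (s k n)"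
proof -
  obtain m where n: "n = Suc m" using assms(2) by (cases n) auto
  show ?thesis using Jn_card[OF assms(1), of m] d_split[of k "Suc (Suc m)"] unfolding n s_Sp by simp
qed

definition CD :: "nat \<Rightarrow> bool" where
  "CD k \<longleftrightarrow> (\<exists>D :: real poly. degree D = 2 * k - 2 \<and> lead_coeff D > 0 \<and>
               (\<forall>n::nat. n \<ge> 1 \<longrightarrow> real (d k n) = poly D (real n)))"

definition CS :: "nat \<Rightarrow> bool" where
  "CS k \<longleftrightarrow> (\<exists>S :: real poly. degree S = 2 * k - 3 \<and> lead_coeff S > 0 \<and>
               (\<forall>n::nat. n \<ge> 1 \<longrightarrow> real (s k n) = poly S (real n)))"

lemma CD1: "CD 1"
proof -
  have h: "d 1 n = d 1 1" if "n \<ge> 1" for n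
    using that
  proof (induction n rule: dec_induct)
    case (step n)
    have "real (d 1 (Suc n)) = real (d 1 n)"
      using recT[of 1 n] step(1) d0[OF step(1)] s1[OF step(1)] s1[of "Suc n"] by simp
    then show ?case using step(3) by simp
  qed simp
  have e: "\<forall>n\<ge>1. real (d 1 n) = poly [:real (d 1 1):] (real n)"
  proof (intro allI impI)
    fix n :: nat assume "n \<ge> 1"
    then show "real (d 1 n) = poly [:real (d 1 1):] (real n)" using h[OF \<open>n \<ge> 1\<close>] by simp
  qed
  have "degree [:real (d 1 1):] = 2*1 - 2" by simp
  moreover have "lead_coeff [:real (d 1 1):] > 0" using d11 by simp
  ultimately show ?thesis unfolding CD_def using e by blast
qed

lemma CS_step:
  assumes k: "k \<ge> 2" and c1: "CD (k-1)" and c2: "k \<ge> 3 \<Longrightarrow> CD (k-2)"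
  shows "CS k"
proof -
  obtain D1 where D1: "degree D1 = 2*(k-1) - 2" "lead_coeff D1 > 0" "\<forall>n\<ge>1. real (d (k-1) n) = poly D1 (real n)"
    using c1 unfolding CD_def by blast
  obtain D2 where D2: "degree (D2 + smult 2 D1) = 2*k - 4" "lead_coeff (D2 + smult 2 D1) = 2 * lead_coeff D1"
     "\<forall>n\<ge>1. real (d (k-2) n) = poly D2 (real n)"
  proof (cases "k \<ge> 3")
    case True
    then obtain D2 where D2: "degree D2 = 2*(k-2) - 2" "\<forall>n\<ge>1. real (d (k-2) n) = poly D2 (real n)"
      using c2 unfolding CD_def by blast
    have lt: "degree D2 < degree (smult 2 D1)" using D2(1) D1(1) True by simp
    have "degree (D2 + smult 2 D1) = 2*k - 4" using degree_add_eq_right[OF lt] D1(1) by simp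
    moreover have "lead_coeff (D2 + smult 2 D1) = 2 * lead_coeff D1"
      using lead_coeff_add_le[OF lt] by simp
    ultimately show ?thesis using that D2(2) by blast
  next
    case False
    then have "k = 2" using k by simp
    have "\<forall>n\<ge>1. real (d (k-2) n) = poly 0 (real n)" using d0 \<open>k = 2\<close> by simp
    moreover have "degree (0 + smult 2 D1) = 2*k - 4" using D1(1) \<open>k = 2\<close> by simp
    moreover have "lead_coeff (0 + smult 2 D1) = 2 * lead_coeff D1" by simp
    ultimately show ?thesis using that by blast
  qed
  define p where "p = D2 + smult 2 D1"
  have lp: "lead_coeff p = 2 * lead_coeff D1" unfolding p_def by (rule D2(2))
  have p0: "p \<noteq> 0" using lp D1(2) by (cases "p = 0") auto
  have rec: "\<forall>n\<ge>1. real (s k (Suc n)) = real (s k n) + poly p (real n)"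
    using recS[OF k] D1(3) D2(3) by (simp add: p_def)
  obtain S where S: "degree S = Suc (degree p)" "lead_coeff S = lead_coeff p / (degree p + 1)"
      "\<forall>n\<ge>1. real (s k n) = poly S (real n)"
    using antidiff[OF rec p0] by blast
  have "degree S = 2*k - 3" using S(1) D2(1) k by (simp add: p_def)
  moreover have "lead_coeff S > 0" using S(2) lp D1(2) by simp
  ultimately show ?thesis unfolding CS_def using S(3) by blast
qed

lemma CD_step:
  assumes k: "k \<ge> 2" and c1: "CD (k-1)" and c2: "CS k"
  shows "CD k"
proof -
  obtain D1 where D1: "degree D1 = 2*(k-1) - 2" "lead_coeff D1 > 0" "\<forall>n\<ge>1. real (d (k-1) n) = poly D1 (real n)"
    using c1 unfolding CD_def by blast
  obtain S where S: "degree S = 2*k - 3" "lead_coeff S > 0" "\<forall>n\<ge>1. real (s k n) = poly S (real n)"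
    using c2 unfolding CS_def by blast
  define p where "p = D1 + smult 2 S"
  have lt: "degree D1 < degree (smult 2 S)" using D1(1) S(1) k by simp
  have dp: "degree p = 2*k - 3" using degree_add_eq_right[OF lt] S(1) by (simp add: p_def)
  have lp: "lead_coeff p = 2 * lead_coeff S" using lead_coeff_add_le[OF lt] by (simp add: p_def)
  have p0: "p \<noteq> 0" using lp S(2) by auto
  define g where "g n = real (d k n) - real (s k n)" for n
  have rec: "\<forall>n\<ge>1. g (Suc n) = g n + poly p (real n)"
  proof (intro allI impI)
    fix n :: nat assume n: "n \<ge> 1"
    show "g (Suc n) = g n + poly p (real n)"
      using recT[of k n] k n D1(3) S(3) by (simp add: g_def p_def)
  qed
  obtain G where G: "degree G = Suc (degree p)" "lead_coeff G = lead_coeff p / (degree p + 1)"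
      "\<forall>n\<ge>1. g n = poly G (real n)"
    using antidiff[OF rec p0] by blast
  have dG: "degree G = 2*k - 2" using G(1) dp k by simp
  have lt2: "degree S < degree G" using dG S(1) k by simp
  have "degree (S + G) = 2*k - 2" using degree_add_eq_right[OF lt2] dG by simp
  moreover have "lead_coeff (S + G) > 0" using lead_coeff_add_le[OF lt2] G(2) lp S(2) by simp
  moreover have "\<forall>n\<ge>1. real (d k n) = poly (S + G) (real n)"
  proof (intro allI impI)
    fix n :: nat assume n: "n \<ge> 1"
    have "g n = poly G (real n)" "real (s k n) = poly S (real n)" using G(3) S(3) n by auto
    then show "real (d k n) = poly (S + G) (real n)" by (simp add: g_def)
  qed
  ultimately show ?thesis unfolding CD_def by blast
qed

lemma CD_CS: "k \<ge> 1 \<Longrightarrow> CD k \<and> (k \<ge> 2 \<longrightarrow> CS k)"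
proof (induction k rule: less_induct)
  case (less k)
  show ?case
  proof (cases "k = 1")
    case True then show ?thesis using CD1 by simp
  next
    case False
    then have k: "k \<ge> 2" using less.prems by simp
    have c1: "CD (k-1)" using less.IH[of "k-1"] k by simp
    have c2: "k \<ge> 3 \<Longrightarrow> CD (k-2)" using less.IH[of "k-2"] by simp
    have "CS k" by (rule CS_step[OF k c1 c2])
    moreover have "CD k" by (rule CD_step[OF k c1 \<open>CS k\<close>])
    ultimately show ?thesis by simp
  qed
qed

theorem theorem3:
  shows "(\<forall>k::nat. k \<ge> 1 \<longrightarrow>
            (\<exists>D :: real poly. degree D = 2 * k - 2 \<and>
               (\<forall>n::nat. n \<ge> 1 \<longrightarrow> real (d k n) = poly D (real n))))
       \<and> (\<forall>k::nat. k \<ge> 2 \<longrightarrow>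
            (\<exists>S :: real poly. degree S = 2 * k - 3 \<and>
               (\<forall>n::nat. n \<ge> 1 \<longrightarrow> real (s k n) = poly S (real n))))"
proof (intro conjI allI impI)
  fix k :: nat assume "k \<ge> 1"
  then have "CD k" using CD_CS by blast
  then show "\<exists>D :: real poly. degree D = 2 * k - 2 \<and>
               (\<forall>n::nat. n \<ge> 1 \<longrightarrow> real (d k n) = poly D (real n))" unfolding CD_def by blast
next
  fix k :: nat assume "k \<ge> 2"
  then have "CS k" using CD_CS by simp
  then show "\<exists>S :: real poly. degree S = 2 * k - 3 \<and>
               (\<forall>n::nat. n \<ge> 1 \<longrightarrow> real (s k n) = poly S (real n))" unfolding CS_def by blast
qed


end
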